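(* Let $(X,d)$ be a compact metric space, $\mathbb{F}=\{f_n:n\in\mathbb{N}\}$ a commutative family of continuous bijective self-maps of $X$, and let $\mathbb{G}$ be a finite rearrangement of $\mathbb{F}$. Then for $x,y\in X$, $(x,y)$ is proximal for $(X,\mathbb{F})$ if and only if $(x,y)$ is proximal for $(X,\mathbb{G})$.
   Context: For a family $\mathbb{H}=\{h_n\}$ write $\omega_n=h_n\circ\cdots\circ h_1$; a pair $(x,y)$ is proximal for $(X,\mathbb{H})$ if $\liminf_{n\to\infty}d(\omega_n(x),\omega_n(y))=0$. $\mathbb{F}$ is commutative if $f_i\circ f_j=f_j\circ f_i$ for all $i,j$. $\mathbb{G}=\{g_n\}$ is a finite rearrangement of $\mathbb{F}$ if $g_n=f_{\pi(n)}$ for a bijection $\pi:\mathbb{N}\to\mathbb{N}$ fixing all but finitely many $n$. *)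

theory Defs
  imports "HOL-Analysis.Analysis"
begin

text \<open>Family indexed by nat (h 0, h 1, ... corresponds to h_1, h_2, ...).
 omega h n = h (n-1) o ... o h 0, i.e. the paper's omega_n.\<close>
fun omega :: "(nat \<Rightarrow> 'a \<Rightarrow> 'a) \<Rightarrow> nat \<Rightarrow> 'a \<Rightarrow> 'a" where
  "omega h 0 = id"
| "omega h (Suc n) = h n \<circ> omega h n"

definition proximal :: "(nat \<Rightarrow> 'a::metric_space \<Rightarrow> 'a) \<Rightarrow> 'a \<Rightarrow> 'a \<Rightarrow> bool" where
  "proximal h x y \<longleftrightarrow> liminf (\<lambda>n. ereal (dist (omega h n x) (omega h n y))) = 0"

definition finite_rearrangement :: "(nat \<Rightarrow> 'b) \<Rightarrow> (nat \<Rightarrow> 'b) \<Rightarrow> bool" where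
  "finite_rearrangement g f \<longleftrightarrow>
     (\<exists>\<pi>. bij \<pi> \<and> finite {n. \<pi> n \<noteq> n} \<and> (\<forall>n. g n = f (\<pi> n)))"

end

theory Submission
  imports Defs
begin

lemma omega_in:
  assumes "\<And>i z. z \<in> X \<Longrightarrow> h i z \<in> X" "z \<in> X"
  shows "omega h n z \<in> X"
  using assms by (induction n) auto

lemma omega_cong:
  assumes "\<And>i. i < n \<Longrightarrow> h i = k i"
  shows "omega h n = omega k n"
  using assms by (induction n) auto

lemma omega_skip:
  assumes comm: "\<And>i j z. z \<in> X \<Longrightarrow> h i (h j z) = h j (h i z)"
    and into: "\<And>i z. z \<in> X \<Longrightarrow> h i z \<in> X"
    and "m \<le> n" "z \<in> X"
  shows "omega h (Suc n) z = h m (omega (\<lambda>i. h (if i < m then i else Suc i)) n z)"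
  using assms(3)
proof (induction n)
  case 0
  then show ?case by simp
next
  case (Suc n)
  show ?case
  proof (cases "m = Suc n")
    case True
    have "omega (\<lambda>i. h (if i < m then i else Suc i)) (Suc n) = omega h (Suc n)"
      by (rule omega_cong) (simp add: True)
    then show ?thesis using True by simp
  next
    case False
    then have mn: "m \<le> n" using Suc.prems by simp
    have X: "omega (\<lambda>i. h (if i < m then i else Suc i)) n z \<in> X"
      by (rule omega_in[OF into \<open>z \<in> X\<close>])
    have "omega h (Suc (Suc n)) z = h (Suc n) (omega h (Suc n) z)" by simp
    also have "\<dots> = h (Suc n) (h m (omega (\<lambda>i. h (if i < m then i else Suc i)) n z))"
      using Suc.IH[OF mn] by simp
    also have "\<dots> = h m (h (Suc n) (omega (\<lambda>i. h (if i < m then i else Suc i)) n z))"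
      using comm[OF X] by simp
    finally show ?thesis using mn by simp
  qed
qed

lemma omega_perm:
  assumes comm: "\<And>i j z. z \<in> X \<Longrightarrow> f i (f j z) = f j (f i z)"
    and into: "\<And>i z. z \<in> X \<Longrightarrow> f i z \<in> X"
  shows "\<And>\<sigma> z. inj_on \<sigma> {..<N} \<Longrightarrow> \<sigma> ` {..<N} \<subseteq> {..<N} \<Longrightarrow> z \<in> X \<Longrightarrow>
     omega (\<lambda>i. f (\<sigma> i)) N z = omega f N z"
proof (induction N)
  case 0
  then show ?case by simp
next
  case (Suc N \<sigma> z)
  have "\<sigma> ` {..<Suc N} = {..<Suc N}"
    using endo_inj_surj[of "{..<Suc N}" \<sigma>] Suc.prems by auto
  then obtain m where m: "m < Suc N" "\<sigma> m = N" by (metis imageE lessThan_iff lessI)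
  define \<sigma>' where "\<sigma>' = (\<lambda>i. \<sigma> (if i < m then i else Suc i))"
  have inj': "inj_on \<sigma>' {..<N}"
    using Suc.prems(1) unfolding \<sigma>'_def inj_on_def
    by (auto split: if_splits) (metis Suc_mono lessThan_iff less_SucI not_less_eq less_trans Suc_lessD)+
  have img': "\<sigma>' ` {..<N} \<subseteq> {..<N}"
  proof
    fix y assume "y \<in> \<sigma>' ` {..<N}"
    then obtain i where i: "i < N" "y = \<sigma>' i" by auto
    let ?j = "if i < m then i else Suc i"
    have "?j < Suc N" "?j \<noteq> m" using i by auto
    then have "\<sigma> ?j \<noteq> \<sigma> m" "\<sigma> ?j < Suc N"
      using Suc.prems(1,2) m(1) unfolding inj_on_def by auto
    then show "y \<in> {..<N}" using i m unfolding \<sigma>'_def by auto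
  qed
  have "omega (\<lambda>i. f (\<sigma> i)) (Suc N) z
      = f (\<sigma> m) (omega (\<lambda>i. f (\<sigma> (if i < m then i else Suc i))) N z)"
    using omega_skip[of X "\<lambda>i. f (\<sigma> i)" m N z] comm into m Suc.prems(3) by simp
  also have "\<dots> = f N (omega (\<lambda>i. f (\<sigma>' i)) N z)" using m unfolding \<sigma>'_def by simp
  also have "\<dots> = f N (omega f N z)" using Suc.IH[OF inj' img' Suc.prems(3)] by simp
  finally show ?case by simp
qed

theorem mainTheorem10:
  fixes X :: "'a::metric_space set" and f g :: "nat \<Rightarrow> 'a \<Rightarrow> 'a"
  assumes "compact X"
    and "\<And>n. continuous_on X (f n)"
    and "\<And>n. bij_betw (f n) X X"
    and "\<And>i j. \<forall>z\<in>X. f i (f j z) = f j (f i z)"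
    and "finite_rearrangement g f"
    and "x \<in> X" and "y \<in> X"
  shows "proximal f x y \<longleftrightarrow> proximal g x y"
proof -
  have into: "\<And>i z. z \<in> X \<Longrightarrow> f i z \<in> X"
    using assms(3) bij_betwE by blast
  have comm: "\<And>i j z. z \<in> X \<Longrightarrow> f i (f j z) = f j (f i z)" using assms(4) by blast
  obtain \<pi> where pi: "bij \<pi>" "finite {n. \<pi> n \<noteq> n}" "\<And>n. g n = f (\<pi> n)"
    using assms(5) unfolding finite_rearrangement_def by blast
  obtain N where N: "{n. \<pi> n \<noteq> n} \<subseteq> {..<N}" using finite_nat_bounded[OF pi(2)] by blast
  have fixpi: "\<And>n. n \<ge> N \<Longrightarrow> \<pi> n = n" using N by force
  have inj: "inj_on \<pi> {..<N}" using pi(1) bij_is_inj inj_on_subset by blast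
  have img: "\<pi> ` {..<N} \<subseteq> {..<N}"
  proof
    fix y assume "y \<in> \<pi> ` {..<N}"
    then obtain i where i: "i < N" "y = \<pi> i" by auto
    show "y \<in> {..<N}"
    proof (rule ccontr)
      assume "y \<notin> {..<N}"
      then have "\<pi> y = y" using fixpi by simp
      then have "\<pi> (\<pi> i) = \<pi> i" using i by simp
      then have "\<pi> i = i" using pi(1) bij_is_inj injD by metis
      then show False using i \<open>y \<notin> {..<N}\<close> by simp
    qed
  qed
  have geq: "omega g n z = omega f n z" if "n \<ge> N" "z \<in> X" for n z
    using that(1)
  proof (induction n rule: dec_induct)
    case base
    have "g = (\<lambda>i. f (\<pi> i))" using pi(3) by blast
    then show ?case using omega_perm[of X f, OF comm into inj img that(2)] by simp
  next
    case (step n)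
    then show ?case using fixpi pi(3) by simp
  qed
  have ev: "eventually (\<lambda>n. ereal (dist (omega f n x) (omega f n y))
                          = ereal (dist (omega g n x) (omega g n y))) sequentially"
    unfolding eventually_at_top_linorder using geq[OF _ assms(6)] geq[OF _ assms(7)] by (intro exI[of _ N]) simp
  show ?thesis unfolding proximal_def using Liminf_eq[OF ev] by simp
qed

end
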